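(* Let $(A,\diamond,\circ,\lambda)$ be a left semi-truss such that $(A,\circ)$ is a group and $(A,\diamond)$ is a left cancellative semigroup with an idempotent $e$. For $x\in A$ let $x^\circ$ denote its inverse in $(A,\circ)$. Then the map $r:A\times A\to A\times A$, $$r(a,b)=\Big(a\circ e^\circ\circ\big((e\circ a^\circ\circ e)\diamond b\big),\; e\circ\big((e\circ a^\circ\circ e)\diamond b\big)^\circ\circ b\Big),$$ is a solution of the set-theoretic Yang–Baxter equation, i.e. $(r\times\mathrm{id})(\mathrm{id}\times r)(r\times\mathrm{id})=(\mathrm{id}\times r)(r\times\mathrm{id})(\mathrm{id}\times r)$ as maps $A^3\to A^3$.
   Context: A left semi-truss $(A,\diamond,\circ,\lambda)$ is a set $A$ with two associative binary operations $\diamond,\circ$ and a function $\lambda:A\times A\to A$ such that $a\circ(b\diamond c)=(a\circ b)\diamond\lambda(a,c)$ for all $a,b,c\in A$. A semigroup $(A,\diamond)$ is left cancellative if $a\diamond b=a\diamond c$ implies $b=c$. *)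

theory Defs
  imports Main
begin

definition left_semi_truss ::
  "('a \<Rightarrow> 'a \<Rightarrow> 'a) \<Rightarrow> ('a \<Rightarrow> 'a \<Rightarrow> 'a) \<Rightarrow> ('a \<Rightarrow> 'a \<Rightarrow> 'a) \<Rightarrow> bool" where
  "left_semi_truss dm cm lam \<longleftrightarrow>
     (\<forall>a b c. dm (dm a b) c = dm a (dm b c)) \<and>
     (\<forall>a b c. cm (cm a b) c = cm a (cm b c)) \<and>
     (\<forall>a b c. cm a (dm b c) = dm (cm a b) (lam a c))"

definition is_group :: "('a \<Rightarrow> 'a \<Rightarrow> 'a) \<Rightarrow> bool" where
  "is_group cm \<longleftrightarrow>
     (\<forall>a b c. cm (cm a b) c = cm a (cm b c)) \<and>
     (\<exists>u. (\<forall>a. cm u a = a \<and> cm a u = a) \<and> (\<forall>a. \<exists>b. cm a b = u \<and> cm b a = u))"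

definition grp_inv :: "('a \<Rightarrow> 'a \<Rightarrow> 'a) \<Rightarrow> 'a \<Rightarrow> 'a" where
  "grp_inv cm a = (THE b. \<forall>x. cm (cm a b) x = x \<and> cm (cm b a) x = x)"

definition left_cancellative :: "('a \<Rightarrow> 'a \<Rightarrow> 'a) \<Rightarrow> bool" where
  "left_cancellative dm \<longleftrightarrow> (\<forall>a b c. dm a b = dm a c \<longrightarrow> b = c)"

definition YBE :: "('a \<times> 'a \<Rightarrow> 'a \<times> 'a) \<Rightarrow> bool" where
  "YBE r \<longleftrightarrow> (\<forall>x y z.
     (let r12 = (\<lambda>(a, b, c). (let (a', b') = r (a, b) in (a', b', c)));
          r23 = (\<lambda>(a, b, c). (let (b', c') = r (b, c) in (a, b', c')))
      in r12 (r23 (r12 (x, y, z))) = r23 (r12 (r23 (x, y, z)))))"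

definition sol_r :: "('a \<Rightarrow> 'a \<Rightarrow> 'a) \<Rightarrow> ('a \<Rightarrow> 'a \<Rightarrow> 'a) \<Rightarrow> 'a \<Rightarrow> 'a \<times> 'a \<Rightarrow> 'a \<times> 'a" where
  "sol_r dm cm e = (\<lambda>(a, b).
     (let i = grp_inv cm; t = dm (cm (cm e (i a)) e) b
      in (cm (cm a (i e)) t, cm (cm e (i t)) b)))"

end

theory Submission
  imports Defs
begin

locale trx =
  fixes dm cm lam :: "'a \<Rightarrow> 'a \<Rightarrow> 'a" and e u :: 'a and i :: "'a \<Rightarrow> 'a"
  assumes dassoc: "dm (dm a b) c = dm a (dm b c)"
    and cassoc: "cm (cm a b) c = cm a (cm b c)"
    and trr: "cm a (dm b c) = dm (cm a b) (lam a c)"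
    and lu: "cm u a = a" and ru: "cm a u = a"
    and li: "cm (i a) a = u" and ri: "cm a (i a) = u"
    and canc: "dm a b = dm a c \<Longrightarrow> b = c"
    and idem: "dm e e = e"
begin

lemma li2: "cm (i a) (cm a x) = x"
  by (metis cassoc li lu)
lemma ri2: "cm a (cm (i a) x) = x"
  by (metis cassoc ri lu)
lemma inv_uniq: "cm a b = u \<Longrightarrow> b = i a"
  by (metis li2 ru)
lemma ii: "i (i a) = a"
  by (metis inv_uniq li)
lemma iprod: "i (cm a b) = cm (i b) (i a)"
  by (metis inv_uniq cassoc ri2 ri)
lemma iu: "i u = u"
  by (metis inv_uniq lu)

lemmas gs = cassoc lu ru li ri li2 ri2 ii iprod iu

lemma F1: "dm e y = y"
  by (rule canc[of e]) (metis dassoc idem)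
lemma F2: "lam u c = c"
  by (rule canc[of b for b]) (metis lu trr)
lemma F3: "lam (cm a b) d = lam a (lam b d)"
proof -
  have "cm (cm a b) (dm u d) = cm a (cm b (dm u d))" by (simp add: cassoc)
  hence "dm (cm (cm a b) u) (lam (cm a b) d) = dm (cm (cm a b) u) (lam a (lam b d))"
    by (simp add: trr cassoc)
  thus ?thesis by (rule canc)
qed
lemma F5: "lam a (dm c d) = dm (lam a c) (lam a d)"
proof -
  have 1: "cm a (dm u (dm c d)) = dm (cm a u) (lam a (dm c d))" by (rule trr)
  have 2: "cm a (dm (dm u c) d) = dm (dm (cm a u) (lam a c)) (lam a d)" by (simp only: trr)
  have "dm (cm a u) (lam a (dm c d)) = dm (cm a u) (dm (lam a c) (lam a d))"
    using 1 2 by (simp only: dassoc)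
  thus ?thesis using canc by blast
qed
lemma F4: "dm z w = cm z (cm (i e) (lam (cm e (i z)) w))"
proof -
  let ?x = "cm z (i e)"
  have "cm ?x (dm e (lam (i ?x) w)) = dm (cm ?x e) (lam ?x (lam (i ?x) w))" by (rule trr)
  also have "\<dots> = dm z w" by (simp add: F3[symmetric] gs F2)
  finally show ?thesis by (simp add: F1 gs)
qed

definition "S a b = lam (cm a (i e)) b"
definition "T a b = cm e (cm (i (S a b)) (cm a (cm (i e) b)))"

lemma K: "S x (cm w (cm (i e) y)) = cm (S x w) (cm (i e) (S (T x w) y))"
proof -
  have 1: "cm w (cm (i e) y) = dm w (lam (cm w (i e)) y)"
    by (simp add: F4 F3[symmetric] gs F2)
  show ?thesis unfolding 1 S_def T_def F5
    by (subst F4) (simp add: F3[symmetric] gs)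
qed

lemma act: "S a (S b c) = S (cm a (cm (i e) b)) c"
  by (simp add: S_def F3[symmetric] gs)

lemma prod: "cm (S a b) (cm (i e) (T a b)) = cm a (cm (i e) b)"
  by (simp add: T_def gs)

lemma ybe_comp:
  shows "S (S x y) (S (T x y) z) = S x (S y z)"
    and "T (S x y) (S (T x y) z) = S (T x (S y z)) (T y z)"
    and "T (T x y) z = T (T x (S y z)) (T y z)"
proof -
  show A: "S (S x y) (S (T x y) z) = S x (S y z)"
    by (simp only: act prod)
  have k1: "S x (cm y (cm (i e) z)) = cm (S x y) (cm (i e) (S (T x y) z))" by (rule K)
  have k2: "S x (cm (S y z) (cm (i e) (T y z))) = cm (S x (S y z)) (cm (i e) (S (T x (S y z)) (T y z)))" by (rule K)
  have k3: "S x (cm y (cm (i e) z)) = cm (S x (S y z)) (cm (i e) (S (T x (S y z)) (T y z)))"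
    using k2 by (simp only: prod)
  show B: "T (S x y) (S (T x y) z) = S (T x (S y z)) (T y z)"
  proof -
    have "T (S x y) (S (T x y) z) = cm e (cm (i (S x (S y z))) (cm (S x y) (cm (i e) (S (T x y) z))))"
      by (simp only: T_def[of "S x y" "S (T x y) z"] A)
    also have "\<dots> = cm e (cm (i (S x (S y z))) (S x (cm y (cm (i e) z))))" by (simp only: k1)
    also have "\<dots> = cm e (cm (i (S x (S y z))) (cm (S x (S y z)) (cm (i e) (S (T x (S y z)) (T y z)))))" by (simp only: k3)
    also have "\<dots> = S (T x (S y z)) (T y z)" by (simp only: li2 ri2)
    finally show ?thesis .
  qed
  let ?W = "T (T x y) z"
  let ?W' = "T (T x (S y z)) (T y z)"
  let ?R = "S (T x (S y z)) (T y z)"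
  have p1: "cm (S (T x y) z) (cm (i e) ?W) = cm (T x y) (cm (i e) z)" by (rule prod)
  have p2: "cm ?R (cm (i e) ?W') = cm (T x (S y z)) (cm (i e) (T y z))" by (rule prod)
  have L: "cm (S x (S y z)) (cm (i e) (cm ?R (cm (i e) ?W))) = cm x (cm (i e) (cm y (cm (i e) z)))"
  proof -
    have "cm (S x (S y z)) (cm (i e) (cm ?R (cm (i e) ?W)))
       = cm (cm (S x (S y z)) (cm (i e) ?R)) (cm (i e) ?W)" by (simp only: cassoc)
    also have "\<dots> = cm (S x (cm y (cm (i e) z))) (cm (i e) ?W)" by (simp only: k3)
    also have "\<dots> = cm (cm (S x y) (cm (i e) (S (T x y) z))) (cm (i e) ?W)" by (simp only: k1)
    also have "\<dots> = cm (S x y) (cm (i e) (cm (S (T x y) z) (cm (i e) ?W)))" by (simp only: cassoc)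
    also have "\<dots> = cm (S x y) (cm (i e) (cm (T x y) (cm (i e) z)))" by (simp only: p1)
    also have "\<dots> = cm (cm (S x y) (cm (i e) (T x y))) (cm (i e) z)" by (simp only: cassoc)
    also have "\<dots> = cm (cm x (cm (i e) y)) (cm (i e) z)" by (simp only: prod)
    also have "\<dots> = cm x (cm (i e) (cm y (cm (i e) z)))" by (simp only: cassoc)
    finally show ?thesis .
  qed
  have R: "cm (S x (S y z)) (cm (i e) (cm ?R (cm (i e) ?W'))) = cm x (cm (i e) (cm y (cm (i e) z)))"
  proof -
    have "cm (S x (S y z)) (cm (i e) (cm ?R (cm (i e) ?W')))
      = cm (S x (S y z)) (cm (i e) (cm (T x (S y z)) (cm (i e) (T y z))))" by (simp only: p2)
    also have "\<dots> = cm (cm (S x (S y z)) (cm (i e) (T x (S y z)))) (cm (i e) (T y z))" by (simp only: cassoc)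
    also have "\<dots> = cm (cm x (cm (i e) (S y z))) (cm (i e) (T y z))" by (simp only: prod)
    also have "\<dots> = cm x (cm (i e) (cm (S y z) (cm (i e) (T y z))))" by (simp only: cassoc)
    also have "\<dots> = cm x (cm (i e) (cm y (cm (i e) z)))" by (simp only: prod)
    finally show ?thesis .
  qed
  have "cm (S x (S y z)) (cm (i e) (cm ?R (cm (i e) ?W))) = cm (S x (S y z)) (cm (i e) (cm ?R (cm (i e) ?W')))"
    using L R by simp
  hence "cm (i e) (cm ?R (cm (i e) ?W)) = cm (i e) (cm ?R (cm (i e) ?W'))"
    by (metis li2)
  hence "cm (i e) ?W = cm (i e) ?W'" by (metis li2 ii)
  thus "?W = ?W'" by (metis ri2)
qed

end

theorem corollary2p7:
  fixes dm cm lam :: "'a \<Rightarrow> 'a \<Rightarrow> 'a" and e :: 'a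
  assumes "left_semi_truss dm cm lam"
    and "is_group cm"
    and "left_cancellative dm"
    and "dm e e = e"
  shows "YBE (sol_r dm cm e)"
proof -
  from assms(2) obtain u where cA: "\<forall>a b c. cm (cm a b) c = cm a (cm b c)"
    and uu: "\<forall>a. cm u a = a \<and> cm a u = a" and inv: "\<forall>a. \<exists>b. cm a b = u \<and> cm b a = u"
    unfolding is_group_def by blast
  have invp: "cm a (grp_inv cm a) = u \<and> cm (grp_inv cm a) a = u" for a
  proof -
    obtain b where b: "cm a b = u" "cm b a = u" using inv by blast
    have "(\<forall>x. cm (cm a c) x = x \<and> cm (cm c a) x = x) \<longleftrightarrow> c = b" for c
    proof
      assume h: "\<forall>x. cm (cm a c) x = x \<and> cm (cm c a) x = x"
      hence "cm a c = u" by (metis uu)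
      hence "cm b (cm a c) = b" by (metis uu)
      thus "c = b" by (metis cA b uu)
    qed (simp add: b uu)
    hence "grp_inv cm a = b" unfolding grp_inv_def by simp
    thus ?thesis using b by simp
  qed
  from assms(1) have dA: "\<And>a b c. dm (dm a b) c = dm a (dm b c)"
    and tR: "\<And>a b c. cm a (dm b c) = dm (cm a b) (lam a c)"
    unfolding left_semi_truss_def by blast+
  from assms(3) have cc: "\<And>a b c. dm a b = dm a c \<Longrightarrow> b = c"
    unfolding left_cancellative_def by blast
  have cA': "\<And>a b c. cm (cm a b) c = cm a (cm b c)" using cA by blast
  have lu': "\<And>a. cm u a = a" and ru': "\<And>a. cm a u = a" using uu by blast+
  have li': "\<And>a. cm (grp_inv cm a) a = u" and ri': "\<And>a. cm a (grp_inv cm a) = u" using invp by blast+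
  interpret trx dm cm lam e u "grp_inv cm"
    apply unfold_locales
            apply (rule dA)
           apply (rule cA')
          apply (rule tR)
         apply (rule lu')
        apply (rule ru')
       apply (rule li')
      apply (rule ri')
     apply (erule cc)
    apply (rule assms(4))
    done
  have sol: "sol_r dm cm e = (\<lambda>(a,b). (S a b, T a b))"
  proof (rule ext, clarify)
    fix a b
    have t: "dm (cm (cm e (grp_inv cm a)) e) b = cm e (cm (grp_inv cm a) (S a b))"
      unfolding S_def by (subst F4) (simp only: gs)
    have s1: "cm (cm a (grp_inv cm e)) (dm (cm (cm e (grp_inv cm a)) e) b) = S a b"
      unfolding t by (simp only: gs)
    show "sol_r dm cm e (a, b) = (S a b, T a b)"
      unfolding sol_r_def Let_def prod.case s1 T_def
      using t by (simp only: gs)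
  qed
  show ?thesis unfolding YBE_def sol
  proof (intro allI)
    fix x y z
    show "(let r12 = \<lambda>(a, b, c). let (a', b') = (\<lambda>(a, b). (S a b, T a b)) (a, b) in (a', b', c);
              r23 = \<lambda>(a, b, c). let (b', c') = (\<lambda>(a, b). (S a b, T a b)) (b, c) in (a, b', c')
          in r12 (r23 (r12 (x, y, z))) = r23 (r12 (r23 (x, y, z))))"
      using ybe_comp[of x y z] by (simp add: Let_def)
  qed
qed

end
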